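(* Let $a_1,\dots,a_{n-1}$, $b_1,\dots,b_m$ and $c_1,\dots,c_m$ be quasi-periodic functions. Then $$\mathcal{R}_n\left(a_1|\cdots|a_{n-1}\,\Big|\,\sum_{k=1}^m\mathcal{R}_2(b_k|c_k)\right)=\sum_{k=1}^m\mathcal{R}_{n+1}(a_1|\cdots|a_{n-1}|b_k|c_k).$$
   Context: For quasi-periodic $h$, $M(h)=\lim_{T\to\infty}\frac1{2T}\int_{-T}^Th(t)dt$. Notation: $(f|g)_t:=f(t)\int_0^tg(\tau)d\tau$. The renormalisation operators are defined inductively: $\mathcal{R}_1a_1:=a_1$; $\mathcal{R}_2(a_1|a_2)_t:=a_1(t)\int_0^t(a_2(\tau)-M(a_2))d\tau$; and for $n>2$, $\mathcal{R}_n(a_1|\cdots|a_n)_t:=\left(a_1\,\big|\,\mathcal{R}_{n-1}(a_2|\cdots|a_n)-M(\mathcal{R}_{n-1}(a_2|\cdots|a_n))\right)_t$. *)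

theory Defs
  imports "HOL-Analysis.Analysis"
begin

definition quasi_periodic :: "(real \<Rightarrow> complex) \<Rightarrow> bool" where
  "quasi_periodic h \<longleftrightarrow>
     (\<exists>S::real set. \<exists>coef::real \<Rightarrow> complex. finite S \<and>
        (\<forall>t. h t = (\<Sum>\<omega>\<in>S. coef \<omega> * exp (\<i> * complex_of_real (\<omega> * t)))))"

definition mean :: "(real \<Rightarrow> complex) \<Rightarrow> complex" where
  "mean h = Lim at_top (\<lambda>T::real. (1 / (2 * complex_of_real T)) * (LBINT t=-T..T. h t))"

text \<open>Renormalisation operator R_n acting on the list [a_1,...,a_n] (n = length of the list).
  The oriented integral \<integral>_0^t is the interval Lebesgue integral (negative for t < 0).\<close>
fun renorm :: "(real \<Rightarrow> complex) list \<Rightarrow> real \<Rightarrow> complex" where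
  "renorm [] = (\<lambda>t. 0)"
| "renorm [a] = a"
| "renorm (a # b # as) =
     (\<lambda>t. a t * (LBINT \<tau>=0..t. renorm (b # as) \<tau> - mean (renorm (b # as))))"

end

theory Submission imports Defs "HOL-Real_Asymp.Real_Asymp" begin

definition ee :: "real \<Rightarrow> real \<Rightarrow> complex" where
  "ee w t = exp (\<i> * complex_of_real (w * t))"

lemma ee_0[simp]: "ee 0 t = 1" by (simp add: ee_def)

lemma ee_add: "ee (w1 + w2) t = ee w1 t * ee w2 t"
  unfolding ee_def by (subst exp_add[symmetric]) (simp add: algebra_simps)

lemma qp_gen:
  assumes "finite A" "\<And>t. h t = (\<Sum>x\<in>A. d x * ee (f x) t)"
  shows "quasi_periodic h"
proof -
  have "h t = (\<Sum>w\<in>f ` A. (\<Sum>x\<in>{x. x \<in> A \<and> f x = w}. d x) * exp (\<i> * complex_of_real (w * t)))" for t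
  proof -
    have "h t = (\<Sum>w\<in>f ` A. \<Sum>x\<in>{x. x \<in> A \<and> f x = w}. d x * ee (f x) t)"
      unfolding assms(2) by (rule sum.image_gen[OF assms(1)])
    also have "\<dots> = (\<Sum>w\<in>f ` A. (\<Sum>x\<in>{x. x \<in> A \<and> f x = w}. d x) * ee w t)"
      by (auto simp: sum_distrib_right intro!: sum.cong)
    finally show ?thesis by (simp add: ee_def)
  qed
  then show ?thesis unfolding quasi_periodic_def using assms(1)
    by (intro exI[of _ "f ` A"] exI[of _ "\<lambda>w. \<Sum>x\<in>{x. x \<in> A \<and> f x = w}. d x"]) simp
qed

lemma qp_def2: "quasi_periodic h \<longleftrightarrow> (\<exists>S coef. finite S \<and> (\<forall>t. h t = (\<Sum>w\<in>S. coef w * ee w t)))"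
  by (simp add: quasi_periodic_def ee_def)

lemma qp_const: "quasi_periodic (\<lambda>t. c)"
  by (rule qp_gen[of "{0::real}" _ "\<lambda>_. c" "\<lambda>_. 0"]) auto

lemma qp_ee: "quasi_periodic (\<lambda>t. c * ee w t)"
  by (rule qp_gen[of "{0::real}" _ "\<lambda>_. c" "\<lambda>_. w"]) auto

lemma qp_add:
  assumes "quasi_periodic f" "quasi_periodic g"
  shows "quasi_periodic (\<lambda>t. f t + g t)"
proof -
  obtain S1 c1 where 1: "finite S1" "\<And>t. f t = (\<Sum>w\<in>S1. c1 w * ee w t)" using assms(1) qp_def2 by metis
  obtain S2 c2 where 2: "finite S2" "\<And>t. g t = (\<Sum>w\<in>S2. c2 w * ee w t)" using assms(2) qp_def2 by metis
  show ?thesis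
  proof (rule qp_gen[of "S1 <+> S2" _ "case_sum c1 c2" "case_sum id id"])
    show "finite (S1 <+> S2)" using 1 2 by simp
    fix t show "f t + g t = (\<Sum>x\<in>S1 <+> S2. case_sum c1 c2 x * ee (case_sum id id x) t)"
      by (simp add: sum.Plus 1 2)
  qed
qed

lemma qp_mult:
  assumes "quasi_periodic f" "quasi_periodic g"
  shows "quasi_periodic (\<lambda>t. f t * g t)"
proof -
  obtain S1 c1 where 1: "finite S1" "\<And>t. f t = (\<Sum>w\<in>S1. c1 w * ee w t)" using assms(1) qp_def2 by metis
  obtain S2 c2 where 2: "finite S2" "\<And>t. g t = (\<Sum>w\<in>S2. c2 w * ee w t)" using assms(2) qp_def2 by metis
  show ?thesis
  proof (rule qp_gen[of "S1 \<times> S2" _ "\<lambda>(x,y). c1 x * c2 y" "\<lambda>(x,y). x + y"])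
    show "finite (S1 \<times> S2)" using 1 2 by simp
    fix t show "f t * g t = (\<Sum>x\<in>S1 \<times> S2. (\<lambda>(x,y). c1 x * c2 y) x * ee ((\<lambda>(x,y). x + y) x) t)"
      by (simp add: 1 2 sum_product sum.cartesian_product ee_add mult_ac split_beta)
  qed
qed

lemma qp_sum:
  assumes "finite K" "\<forall>k\<in>K. quasi_periodic (f k)"
  shows "quasi_periodic (\<lambda>t. \<Sum>k\<in>K. f k t)"
  using assms by (induction K rule: finite_induct) (auto simp: qp_const intro!: qp_add)

lemma qp_cont:
  assumes "quasi_periodic f" shows "isCont f x"
proof -
  obtain S c where 1: "finite S" "\<And>t. f t = (\<Sum>w\<in>S. c w * ee w t)" using assms qp_def2 by metis
  have "f = (\<lambda>t. \<Sum>w\<in>S. c w * ee w t)" using 1 by auto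
  then show ?thesis unfolding ee_def by (simp only:) (intro continuous_intros)
qed

lemma qp_integrable:
  fixes a b :: real
  assumes "quasi_periodic f" shows "interval_lebesgue_integrable lborel a b f"
  by (intro interval_integrable_isCont qp_cont[OF assms])

lemma LBINT_sum:
  fixes a b :: real
  assumes "finite K" "\<forall>k\<in>K. quasi_periodic (f k)"
  shows "(LBINT x=a..b. (\<Sum>k\<in>K. f k x)) = (\<Sum>k\<in>K. LBINT x=a..b. f k x)"
  using assms
proof (induction K rule: finite_induct)
  case empty then show ?case by simp
next
  case (insert k K)
  have q1: "quasi_periodic (f k)" using insert.prems by simp
  have q2: "quasi_periodic (\<lambda>x. \<Sum>k\<in>K. f k x)" using insert.prems insert.hyps(1) by (intro qp_sum) auto
  have "(LBINT x=a..b. (\<Sum>k\<in>insert k K. f k x)) = (LBINT x=a..b. f k x + (\<Sum>k\<in>K. f k x))"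
    using insert.hyps by simp
  also have "\<dots> = (LBINT x=a..b. f k x) + (LBINT x=a..b. (\<Sum>k\<in>K. f k x))"
    by (rule interval_lebesgue_integral_add(2)[OF qp_integrable[OF q1] qp_integrable[OF q2]])
  also have "\<dots> = (LBINT x=a..b. f k x) + (\<Sum>k\<in>K. LBINT x=a..b. f k x)"
    using insert.IH insert.prems by simp
  finally show ?case using insert.hyps by simp
qed

lemma norm_ee[simp]: "norm (ee w t) = 1"
  unfolding ee_def by (rule norm_exp_i_times)

lemma ee_integral:
  fixes a b :: real
  shows "(LBINT x=a..b. ee w x) = (if w = 0 then complex_of_real (b - a) else (ee w b - ee w a) / (\<i> * complex_of_real w))"
proof (cases "w = 0")
  case True
  have v: "((\<lambda>x. complex_of_real x) has_vector_derivative 1) (at x within S)" for x S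
    using has_vector_derivative_real_field[of "\<lambda>z. z" 1 x S] by (simp add: DERIV_ident)
  have "(LBINT x=a..b. (1::complex)) = complex_of_real b - complex_of_real a"
    by (rule interval_integral_FTC_finite) (simp_all add: v)
  then show ?thesis using True by simp
next
  case False
  have d: "((\<lambda>z. exp (\<i> * complex_of_real w * z) / (\<i> * complex_of_real w)) has_field_derivative ee w x) (at (complex_of_real x))" for x
  proof -
    have "((\<lambda>z. exp (\<i> * complex_of_real w * z) / (\<i> * complex_of_real w)) has_field_derivative
       exp (\<i> * complex_of_real w * complex_of_real x) * (\<i> * complex_of_real w) / (\<i> * complex_of_real w)) (at (complex_of_real x))"
      by (rule DERIV_cdivide, rule DERIV_chain2[OF DERIV_exp DERIV_cmult_Id])
    then show ?thesis using False by (simp add: ee_def mult_ac)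
  qed
  have e: "ee w x / (\<i> * complex_of_real w) = exp (\<i> * complex_of_real w * complex_of_real x) / (\<i> * complex_of_real w)" for x
    by (simp add: ee_def mult_ac)
  have c: "continuous_on S (ee w)" for S
    unfolding ee_def by (intro continuous_intros)
  have "(LBINT x=a..b. ee w x) = ee w b / (\<i> * complex_of_real w) - ee w a / (\<i> * complex_of_real w)"
    unfolding e
    by (rule interval_integral_FTC_finite[OF c has_vector_derivative_real_field[OF d]])
  then show ?thesis using False by (simp add: diff_divide_distrib)
qed

lemma LBINT_one: "(LBINT x=ereal a..ereal b. (1::complex)) = complex_of_real (b - a)"
  using ee_integral[of a b 0] by simp

definition avg :: "(real \<Rightarrow> complex) \<Rightarrow> real \<Rightarrow> complex" where
  "avg h = (\<lambda>T. (1 / (2 * complex_of_real T)) * (LBINT t=-T..T. h t))"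

lemma mean_avg: "mean h = Lim at_top (avg h)"
  by (simp add: mean_def avg_def)

lemma avg_ee: "(avg (ee w) \<longlongrightarrow> (if w = 0 then 1 else 0)) at_top"
proof (cases "w = 0")
  case True
  have "eventually (\<lambda>T. avg (ee w) T = 1) at_top"
    using eventually_gt_at_top[of "0::real"]
  proof eventually_elim
    case (elim T)
    then show ?case using True by (simp add: avg_def LBINT_one field_simps)
  qed
  then show ?thesis using True by (simp add: tendsto_eventually)
next
  case False
  have "eventually (\<lambda>T. norm (avg (ee w) T) \<le> 1 / (\<bar>w\<bar> * T)) at_top"
    using eventually_gt_at_top[of "0::real"]
  proof eventually_elim
    case (elim T)
    have n: "norm (ee w T - ee w (-T)) \<le> 2"
      using norm_triangle_ineq4[of "ee w T" "ee w (-T)"] by simp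
    have "norm (avg (ee w) T) = norm (ee w T - ee w (-T)) / (2 * T * \<bar>w\<bar>)"
      using False elim by (simp add: avg_def ee_integral norm_mult norm_divide)
    also have "\<dots> \<le> 2 / (2 * T * \<bar>w\<bar>)"
      using False elim n by (intro divide_right_mono) auto
    also have "\<dots> = 1 / (\<bar>w\<bar> * T)" by simp
    finally show ?case .
  qed
  moreover have "((\<lambda>T. 1 / (\<bar>w\<bar> * T)) \<longlongrightarrow> 0) at_top"
    using False by real_asymp
  ultimately have "(avg (ee w) \<longlongrightarrow> 0) at_top"
    by (rule Lim_null_comparison)
  then show ?thesis using False by simp
qed

lemma avg_repr:
  assumes "finite S" "\<And>t. h t = (\<Sum>w\<in>S. c w * ee w t)"
  shows "(avg h \<longlongrightarrow> (\<Sum>w\<in>S. if w = 0 then c w else 0)) at_top"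
proof -
  have "avg h = (\<lambda>T. \<Sum>w\<in>S. c w * avg (ee w) T)"
  proof (rule ext)
    fix T :: real
    have "(LBINT t=-T..T. h t) = (LBINT t=-T..T. (\<Sum>w\<in>S. c w * ee w t))"
      using assms(2) by simp
    also have "\<dots> = (\<Sum>w\<in>S. LBINT t=-T..T. c w * ee w t)"
      using assms(1) by (intro LBINT_sum) (auto intro: qp_ee)
    finally show "avg h T = (\<Sum>w\<in>S. c w * avg (ee w) T)" by (simp add: avg_def sum_distrib_left sum_divide_distrib mult_ac)
  qed
  moreover have "((\<lambda>T. \<Sum>w\<in>S. c w * avg (ee w) T) \<longlongrightarrow> (\<Sum>w\<in>S. c w * (if w = 0 then 1 else 0))) at_top"
    by (intro tendsto_sum tendsto_mult_left avg_ee)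
  ultimately show ?thesis by (simp add: if_distrib cong: if_cong)
qed

lemma qp_avg_tendsto:
  assumes "quasi_periodic h"
  shows "(avg h \<longlongrightarrow> mean h) at_top"
proof -
  obtain S c where 1: "finite S" "\<And>t. h t = (\<Sum>w\<in>S. c w * ee w t)" using assms qp_def2 by metis
  have "(avg h \<longlongrightarrow> (\<Sum>w\<in>S. if w = 0 then c w else 0)) at_top" by (rule avg_repr[OF 1])
  moreover then have "mean h = (\<Sum>w\<in>S. if w = 0 then c w else 0)"
    unfolding mean_avg by (intro tendsto_Lim) auto
  ultimately show ?thesis by simp
qed

lemma mean_repr:
  assumes "finite S" "\<And>t. h t = (\<Sum>w\<in>S. c w * ee w t)"
  shows "mean h = (\<Sum>w\<in>S. if w = 0 then c w else 0)"
  unfolding mean_avg by (intro tendsto_Lim avg_repr[OF assms]) auto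

lemma mean_sum:
  assumes "finite K" "\<forall>k\<in>K. quasi_periodic (f k)"
  shows "mean (\<lambda>t. \<Sum>k\<in>K. f k t) = (\<Sum>k\<in>K. mean (f k))"
proof -
  have "avg (\<lambda>t. \<Sum>k\<in>K. f k t) = (\<lambda>T. \<Sum>k\<in>K. avg (f k) T)"
    using LBINT_sum[OF assms] by (simp add: avg_def sum_distrib_left sum_divide_distrib)
  moreover have "((\<lambda>T. \<Sum>k\<in>K. avg (f k) T) \<longlongrightarrow> (\<Sum>k\<in>K. mean (f k))) at_top"
    using assms(2) by (intro tendsto_sum qp_avg_tendsto) auto
  ultimately show ?thesis unfolding mean_avg[of "\<lambda>t. \<Sum>k\<in>K. f k t"] by (intro tendsto_Lim) auto
qed

lemma qp_diff_const:
  assumes "quasi_periodic f" shows "quasi_periodic (\<lambda>t. f t - c)"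
  using qp_add[OF assms qp_const[of "-c"]] by simp

lemma qp_integral_centered:
  assumes "quasi_periodic g"
  shows "quasi_periodic (\<lambda>t. LBINT \<tau>=0..t. g \<tau> - mean g)"
proof -
  obtain S c where 1: "finite S" "\<And>t. g t = (\<Sum>w\<in>S. c w * ee w t)" using assms qp_def2 by metis
  define d where "d w = (if w = 0 then 0 else c w)" for w
  have gc: "g \<tau> - mean g = (\<Sum>w\<in>S. d w * ee w \<tau>)" for \<tau>
  proof -
    have "g \<tau> - mean g = (\<Sum>w\<in>S. c w * ee w \<tau> - (if w = 0 then c w else 0))"
      by (simp add: 1(2) mean_repr[OF 1] sum_subtractf)
    also have "\<dots> = (\<Sum>w\<in>S. d w * ee w \<tau>)"
      by (rule sum.cong) (auto simp: d_def)
    finally show ?thesis .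
  qed
  have eq: "(LBINT \<tau>=0..t. g \<tau> - mean g) =
     (\<Sum>w\<in>S. if w = 0 then 0 else c w * (ee w t - ee w 0) / (\<i> * complex_of_real w))" for t :: real
  proof -
    have "(LBINT \<tau>=0..t. g \<tau> - mean g) = (LBINT \<tau>=0..t. (\<Sum>w\<in>S. d w * ee w \<tau>))"
      by (simp add: gc)
    also have "\<dots> = (\<Sum>w\<in>S. LBINT \<tau>=0..t. d w * ee w \<tau>)"
      unfolding zero_ereal_def using 1(1) by (intro LBINT_sum) (auto intro: qp_ee)
    also have "\<dots> = (\<Sum>w\<in>S. if w = 0 then 0 else c w * (ee w t - ee w 0) / (\<i> * complex_of_real w))"
    proof (rule sum.cong)
      fix w assume "w \<in> S"
      have "(LBINT \<tau>=0..t. d w * ee w \<tau>) = d w * (LBINT \<tau>=0..t. ee w \<tau>)"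
        by (rule interval_lebesgue_integral_mult_right)
      also have "\<dots> = (if w = 0 then 0 else c w * (ee w t - ee w 0) / (\<i> * complex_of_real w))"
        using ee_integral[of 0 t w] by (simp add: d_def zero_ereal_def)
      finally show "(LBINT \<tau>=0..t. d w * ee w \<tau>) = (if w = 0 then 0 else c w * (ee w t - ee w 0) / (\<i> * complex_of_real w))" .
    qed simp
    finally show ?thesis .
  qed
  have q: "quasi_periodic (\<lambda>t. if w = 0 then 0 else c w * (ee w t - ee w 0) / (\<i> * complex_of_real w))" for w
  proof (cases "w = 0")
    case True then show ?thesis by (simp add: qp_const)
  next
    case False
    have "(\<lambda>t. if w = 0 then 0 else c w * (ee w t - ee w 0) / (\<i> * complex_of_real w)) =
          (\<lambda>t. (c w / (\<i> * complex_of_real w)) * ee w t - c w * ee w 0 / (\<i> * complex_of_real w))"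
      using False by (simp add: field_simps)
    then show ?thesis using qp_diff_const[OF qp_ee[of "c w / (\<i> * complex_of_real w)" w], of "c w * ee w 0 / (\<i> * complex_of_real w)"] by simp
  qed
  have "(\<lambda>t. LBINT \<tau>=0..t. g \<tau> - mean g) =
     (\<lambda>t. \<Sum>w\<in>S. if w = 0 then 0 else c w * (ee w t - ee w 0) / (\<i> * complex_of_real w))"
    using eq by (rule ext)
  then show ?thesis using 1(1) q by (simp add: qp_sum)
qed

lemma renorm_cons:
  "L \<noteq> [] \<Longrightarrow> renorm (x # L) = (\<lambda>t. x t * (LBINT \<tau>=0..t. renorm L \<tau> - mean (renorm L)))"
  by (cases L) auto

lemma renorm_qp:
  "L \<noteq> [] \<Longrightarrow> \<forall>f\<in>set L. quasi_periodic f \<Longrightarrow> quasi_periodic (renorm L)"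
proof (induction L)
  case Nil then show ?case by simp
next
  case (Cons x L)
  show ?case
  proof (cases "L = []")
    case True then show ?thesis using Cons.prems by simp
  next
    case False
    have "quasi_periodic (renorm L)" using Cons False by simp
    then show ?thesis using Cons.prems False
      by (simp add: renorm_cons qp_mult qp_integral_centered)
  qed
qed

lemma renorm_app_renorm:
  "renorm (as @ [renorm (b # c # cs)]) = renorm (as @ b # c # cs)"
proof (induction as)
  case Nil then show ?case by simp
next
  case (Cons x rest)
  then show ?case by (simp add: renorm_cons)
qed

lemma renorm_linear:
  assumes "\<forall>f\<in>set as. quasi_periodic f" "finite K" "\<forall>k\<in>K. quasi_periodic (g k)"
  shows "renorm (as @ [(\<lambda>t. \<Sum>k\<in>K. g k t)]) = (\<lambda>t. \<Sum>k\<in>K. renorm (as @ [g k]) t)"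
  using assms(1)
proof (induction as)
  case Nil then show ?case by simp
next
  case (Cons x rest)
  define G where "G k = renorm (rest @ [g k])" for k
  have IH: "renorm (rest @ [(\<lambda>t. \<Sum>k\<in>K. g k t)]) = (\<lambda>t. \<Sum>k\<in>K. G k t)"
    using Cons by (simp add: G_def)
  have qG: "\<forall>k\<in>K. quasi_periodic (G k)"
    using Cons.prems assms(3) unfolding G_def by (auto intro!: renorm_qp)
  have qG': "\<forall>k\<in>K. quasi_periodic (\<lambda>t. G k t - mean (G k))"
    using qG by (auto intro: qp_diff_const)
  have m: "mean (\<lambda>t. \<Sum>k\<in>K. G k t) = (\<Sum>k\<in>K. mean (G k))"
    by (rule mean_sum[OF assms(2) qG])
  have i: "(LBINT \<tau>=0..t. (\<Sum>k\<in>K. G k \<tau>) - (\<Sum>k\<in>K. mean (G k))) =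
           (\<Sum>k\<in>K. LBINT \<tau>=0..t. G k \<tau> - mean (G k))" for t :: real
    using LBINT_sum[OF assms(2) qG', of 0 t] by (simp add: sum_subtractf zero_ereal_def)
  show ?case
    by (rule ext) (simp add: renorm_cons IH m i sum_distrib_left G_def[symmetric])
qed

theorem corollary3p6:
  fixes a b c :: "nat \<Rightarrow> real \<Rightarrow> complex" and n m :: nat
  assumes "n \<ge> 1" and "m \<ge> 1"
    and "\<forall>i\<in>{1..<n}. quasi_periodic (a i)"
    and "\<forall>k\<in>{1..m}. quasi_periodic (b k)"
    and "\<forall>k\<in>{1..m}. quasi_periodic (c k)"
  shows "renorm (map a [1..<n] @ [(\<lambda>t. \<Sum>k=1..m. renorm [b k, c k] t)])
       = (\<lambda>t. \<Sum>k=1..m. renorm (map a [1..<n] @ [b k, c k]) t)"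
proof -
  have qa: "\<forall>f\<in>set (map a [1..<n]). quasi_periodic f" using assms(3) by auto
  have qbc1: "quasi_periodic (renorm [b k, c k])" if "k \<in> {1..m}" for k
    by (rule renorm_qp) (use that assms(4,5) in auto)
  have qbc: "\<forall>k\<in>{1..m}. quasi_periodic (renorm [b k, c k])"
    using qbc1 by blast
  show ?thesis
    using renorm_linear[OF qa finite_atLeastAtMost qbc]
    by (simp add: renorm_app_renorm[where cs = "[]", simplified])
qed

end
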